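(* Let $\rho>1$. There exists $C=C(\rho)$ such that for all $\sigma_0,\sigma_1,\sigma_2\in\mathbb{R}$, \[ \int_{-\infty}^{\infty}\frac{dx}{\langle x^3+\sigma_2x^2+\sigma_1x+\sigma_0\rangle^{\rho}}\le C\langle3\sigma_1-\sigma_2^2\rangle^{-\frac14}. \]
   Context: $\langle x\rangle=1+|x|$. *)

theory Defs
  imports "HOL-Analysis.Analysis"
begin

definition jb :: "real \<Rightarrow> real" where
  "jb x = 1 + \<bar>x\<bar>"

end

theory Submission
  imports Defs
begin

lemma deriv_glue0:
  fixes F A B :: "real \<Rightarrow> real"
  assumes "\<And>x. x \<ge> 0 \<Longrightarrow> F x = A x" "\<And>x. x \<le> 0 \<Longrightarrow> F x = B x"
    and "(A has_real_derivative d) (at 0)" "(B has_real_derivative d) (at 0)"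
  shows "(F has_real_derivative d) (at 0)"
proof -
  have a: "((\<lambda>h. (A (0 + h) - A 0) / h) \<longlongrightarrow> d) (at 0)" using assms(3) by (simp add: DERIV_def)
  have b: "((\<lambda>h. (B (0 + h) - B 0) / h) \<longlongrightarrow> d) (at 0)" using assms(4) by (simp add: DERIV_def)
  have r: "((\<lambda>h. (F (0 + h) - F 0) / h) \<longlongrightarrow> d) (at_right 0)"
  proof (rule Lim_transform_eventually)
    show "((\<lambda>h. (A (0 + h) - A 0) / h) \<longlongrightarrow> d) (at_right 0)"
      using a by (rule tendsto_within_subset) simp
    show "\<forall>\<^sub>F h in at_right 0. (A (0 + h) - A 0) / h = (F (0 + h) - F 0) / h"
    proof (rule eventually_at_rightI[of 0 1])
      fix h :: real assume "h \<in> {0<..<1}"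
      then show "(A (0 + h) - A 0) / h = (F (0 + h) - F 0) / h"
        using assms(1)[of h] assms(1)[of 0] by simp
    qed simp
  qed
  have l: "((\<lambda>h. (F (0 + h) - F 0) / h) \<longlongrightarrow> d) (at_left 0)"
  proof (rule Lim_transform_eventually)
    show "((\<lambda>h. (B (0 + h) - B 0) / h) \<longlongrightarrow> d) (at_left 0)"
      using b by (rule tendsto_within_subset) simp
    show "\<forall>\<^sub>F h in at_left 0. (B (0 + h) - B 0) / h = (F (0 + h) - F 0) / h"
    proof (rule eventually_at_leftI[of "-1"])
      fix h :: real assume "h \<in> {-1<..<0}"
      then show "(B (0 + h) - B 0) / h = (F (0 + h) - F 0) / h"
        using assms(2)[of h] assms(2)[of 0] by simp
    qed simp
  qed
  show ?thesis using r l by (simp add: DERIV_def filterlim_at_split)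
qed

lemma F1_deriv:
  assumes "u > -1" "r > 1"
  shows "((\<lambda>u. (1 - (1 + u) powr (1 - r)) / (r - 1)) has_real_derivative 1 / (1 + u) powr r) (at u)"
proof -
  have "((\<lambda>u. (1 - (1 + u) powr (1 - r)) / (r - 1)) has_real_derivative
      (0 - (1 - r) * (1 + u) powr (1 - r - 1) * (0 + 1)) / (r - 1)) (at u)"
    using assms by (auto intro!: derivative_eq_intros)
  moreover have "(0 - (1 - r) * (1 + u) powr (1 - r - 1) * (0 + 1)) / (r - 1) = 1 / (1 + u) powr r"
    using assms by (simp add: powr_minus_divide field_simps)
  ultimately show ?thesis by simp
qed

lemma G2_deriv:
  assumes "u < 1" "r > 1"
  shows "((\<lambda>u. - ((1 - (1 - u) powr (1 - r)) / (r - 1))) has_real_derivative 1 / (1 - u) powr r) (at u)"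
proof -
  have "((\<lambda>u. - ((1 - (1 + (- u)) powr (1 - r)) / (r - 1))) has_real_derivative
      - ((1 / (1 + (-u)) powr r) * (- 1))) (at u)"
  proof (rule DERIV_minus, rule DERIV_chain2[OF F1_deriv])
    show "((\<lambda>u. - u) has_real_derivative -1) (at u)" by (rule derivative_eq_intros) simp_all
  qed (use assms in auto)
  then show ?thesis by simp
qed

definition FF :: "real \<Rightarrow> real \<Rightarrow> real" where
  "FF r u = sgn u * (1 - (1 + \<bar>u\<bar>) powr (1 - r)) / (r - 1)"

lemma FF_deriv:
  assumes "r > 1"
  shows "(FF r has_real_derivative 1 / jb u powr r) (at u)"
proof -
  have A: "FF r x = (1 - (1 + x) powr (1 - r)) / (r - 1)" if "x \<ge> 0" for x
  proof (cases "x = 0")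
    case False
    then have "sgn x = 1" "\<bar>x\<bar> = x" using that by auto
    then show ?thesis by (simp add: FF_def)
  qed (simp add: FF_def)
  have B: "FF r x = - ((1 - (1 - x) powr (1 - r)) / (r - 1))" if "x \<le> 0" for x
  proof (cases "x = 0")
    case False
    then have "sgn x = -1" "\<bar>x\<bar> = - x" using that by auto
    then show ?thesis by (simp add: FF_def) (metis minus_diff_eq divide_minus_left)
  qed (simp add: FF_def)
  consider "u > 0" | "u < 0" | "u = 0" by linarith
  then show ?thesis
  proof cases
    case 1
    have "((\<lambda>u. (1 - (1 + u) powr (1 - r)) / (r - 1)) has_real_derivative 1 / jb u powr r) (at u)"
      using F1_deriv[of u r] 1 assms by (simp add: jb_def)
    moreover have "\<forall>\<^sub>F x in nhds u. FF r x = (1 - (1 + x) powr (1 - r)) / (r - 1)"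
      by (rule eventually_mono[OF eventually_nhds_in_open[of "{0<..}" u]]) (use 1 A in auto)
    ultimately show ?thesis by (subst DERIV_cong_ev[OF refl _ refl])
  next
    case 2
    have "((\<lambda>u. - ((1 - (1 - u) powr (1 - r)) / (r - 1))) has_real_derivative 1 / jb u powr r) (at u)"
      using G2_deriv[of u r] 2 assms by (simp add: jb_def)
    moreover have "\<forall>\<^sub>F x in nhds u. FF r x = - ((1 - (1 - x) powr (1 - r)) / (r - 1))"
      by (rule eventually_mono[OF eventually_nhds_in_open[of "{..<0}" u]]) (use 2 B in auto)
    ultimately show ?thesis by (subst DERIV_cong_ev[OF refl _ refl])
  next
    case 3
    show ?thesis unfolding 3
      by (rule deriv_glue0[OF A B]) (use F1_deriv[of 0 r] G2_deriv[of 0 r] assms in \<open>auto simp: jb_def\<close>)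
  qed
qed

lemma FF_bound:
  assumes "r > 1"
  shows "\<bar>FF r u\<bar> \<le> 1 / (r - 1)"
proof -
  have "(1 + \<bar>u\<bar>) powr (1 - r) \<le> 1"
    using assms powr_mono2'[of "1-r" 1 "1 + \<bar>u\<bar>"] by simp
  moreover have "0 \<le> (1 + \<bar>u\<bar>) powr (1 - r)" by simp
  ultimately have "\<bar>1 - (1 + \<bar>u\<bar>) powr (1 - r)\<bar> \<le> 1" by linarith
  moreover have "1 - (1 + \<bar>u\<bar>) powr (1 - r) \<ge> 0" using \<open>(1 + \<bar>u\<bar>) powr (1 - r) \<le> 1\<close> by linarith
  ultimately have q: "0 \<le> (1 - (1 + \<bar>u\<bar>) powr (1 - r)) / (r - 1)" "(1 - (1 + \<bar>u\<bar>) powr (1 - r)) / (r - 1) \<le> 1 / (r - 1)"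
    using assms by (simp_all add: divide_right_mono)
  define Q where "Q = (1 - (1 + \<bar>u\<bar>) powr (1 - r)) / (r - 1)"
  have "FF r u = sgn u * Q"
    unfolding FF_def Q_def by simp
  then have "\<bar>FF r u\<bar> = \<bar>sgn u\<bar> * Q" using q(1) unfolding Q_def[symmetric] by (simp add: abs_mult)
  also have "\<dots> \<le> 1 * Q" using q(1) unfolding Q_def[symmetric] by (intro mult_right_mono) (auto simp: abs_sgn_eq)
  finally show ?thesis using q(2) unfolding Q_def[symmetric] by simp
qed

lemma h_cont:
  fixes f f' :: "real \<Rightarrow> real"
  assumes d: "\<And>x. (f has_real_derivative f' x) (at x)" and c: "continuous_on UNIV f'"
  shows "continuous_on UNIV (\<lambda>x. \<bar>f' x\<bar> / jb (f x) powr r)"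
proof -
  have cf: "continuous_on UNIV f"
    using d by (intro continuous_at_imp_continuous_on) (auto intro: DERIV_isCont)
  show ?thesis unfolding jb_def
    by (intro continuous_intros cf c) (auto simp: add_pos_nonneg)
qed

lemma piece:
  fixes f f' :: "real \<Rightarrow> real"
  assumes r: "r > 1" and d: "\<And>x. (f has_real_derivative f' x) (at x)" and c: "continuous_on UNIV f'"
    and sg: "(\<forall>x\<in>{a..b}. 0 \<le> f' x) \<or> (\<forall>x\<in>{a..b}. f' x \<le> 0)"
  shows "(\<integral>\<^sup>+x. ennreal (\<bar>f' x\<bar> / jb (f x) powr r * indicator {a..b} x) \<partial>lborel) \<le> ennreal (2/(r-1))"
proof (cases "a \<le> b")
  case False
  then have "{a..b} = {}" by auto
  then show ?thesis by simp
next
  case True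
  define h where "h x = \<bar>f' x\<bar> / jb (f x) powr r" for x
  define G where "G x = FF r (f x)" for x
  have hc: "continuous_on UNIV h" unfolding h_def by (rule h_cont[OF d c])
  have Gd: "(G has_real_derivative f' x * (1 / jb (f x) powr r)) (at x)" for x
    unfolding G_def using DERIV_chain2[OF FF_deriv[OF r] d] by (simp add: mult.commute)
  have ftc: "((\<lambda>x. f' x * (1 / jb (f x) powr r)) has_integral (G b - G a)) {a..b}"
    using True Gd
    by (intro fundamental_theorem_of_calculus)
       (auto simp: has_real_derivative_iff_has_vector_derivative[symmetric] intro: has_field_derivative_at_within)
  have hint: "\<exists>I. (h has_integral I) {a..b} \<and> I \<le> 2/(r-1)"
  proof (cases "\<forall>x\<in>{a..b}. 0 \<le> f' x")
    case True
    have "(h has_integral (G b - G a)) {a..b}"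
      using ftc by (rule has_integral_eq[rotated]) (use True in \<open>auto simp: h_def\<close>)
    moreover have "G b - G a \<le> 2/(r-1)"
      using FF_bound[OF r, of "f b"] FF_bound[OF r, of "f a"] unfolding G_def by linarith
    ultimately show ?thesis by blast
  next
    case False
    then have F: "\<forall>x\<in>{a..b}. f' x \<le> 0" using sg by blast
    have "(h has_integral -(G b - G a)) {a..b}"
      using has_integral_neg[OF ftc] by (rule has_integral_eq[rotated]) (use F in \<open>auto simp: h_def\<close>)
    moreover have "-(G b - G a) \<le> 2/(r-1)"
      using FF_bound[OF r, of "f b"] FF_bound[OF r, of "f a"] unfolding G_def by linarith
    ultimately show ?thesis by blast
  qed
  then obtain I where I: "(h has_integral I) {a..b}" "I \<le> 2/(r-1)" by blast
  have "((\<lambda>x. h x * indicator {a..b} x) has_integral I) UNIV"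
  proof -
    have eq: "(\<lambda>x. h x * indicator {a..b} x) = (\<lambda>x. if x \<in> {a..b} then h x else 0)"
      by (auto simp: indicator_def)
    show ?thesis unfolding eq using I(1) has_integral_restrict[of "{a..b}" UNIV h I] by blast
  qed
  moreover have "(\<lambda>x. h x * indicator {a..b} x) \<in> borel_measurable borel"
    using borel_measurable_continuous_onI[OF hc] by measurable
  ultimately have "(\<integral>\<^sup>+x. ennreal (h x * indicator {a..b} x) \<partial>lborel) = I"
    by (intro nn_integral_has_integral_lborel) (auto simp: h_def indicator_def jb_def)
  then show ?thesis using I(2) unfolding h_def by (simp add: ennreal_leI)
qed

lemma total:
  fixes f f' :: "real \<Rightarrow> real"
  assumes r: "r > 1" and d: "\<And>x. (f has_real_derivative f' x) (at x)" and c: "continuous_on UNIV f'"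
    and p: "p1 \<le> p2" and s1: "\<And>x. x \<le> p1 \<Longrightarrow> 0 \<le> f' x"
    and s2: "(\<forall>x\<in>{p1..p2}. 0 \<le> f' x) \<or> (\<forall>x\<in>{p1..p2}. f' x \<le> 0)"
    and s3: "\<And>x. x \<ge> p2 \<Longrightarrow> 0 \<le> f' x"
  shows "(\<integral>\<^sup>+x. ennreal (\<bar>f' x\<bar> / jb (f x) powr r) \<partial>lborel) \<le> ennreal (6/(r-1))"
proof -
  define h where "h x = \<bar>f' x\<bar> / jb (f x) powr r" for x
  have hc: "continuous_on UNIV h" unfolding h_def by (rule h_cont[OF d c])
  have hm[measurable]: "h \<in> borel_measurable borel" using borel_measurable_continuous_onI[OF hc] .
  have hmI[measurable]: "(\<lambda>x. ennreal (h x * indicator {c..e} x)) \<in> borel_measurable lborel" for c e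
  proof -
    have "(\<lambda>x. h x * indicator {c..e} x) \<in> borel_measurable borel"
      by (intro borel_measurable_times hm borel_measurable_indicator) simp
    then have "(\<lambda>x. h x * indicator {c..e} x) \<in> borel_measurable lborel" by simp
    then show ?thesis by (rule measurable_compose[OF _ measurable_ennreal])
  qed
  have hnn: "0 \<le> h x" for x unfolding h_def jb_def by simp
  have bnd: "(\<integral>\<^sup>+x. ennreal (h x * indicator {- real n..real n} x) \<partial>lborel) \<le> ennreal (6/(r-1))" for n
  proof -
    define a where "a = - real n"
    define b where "b = real n"
    have P1: "(\<integral>\<^sup>+x. ennreal (h x * indicator {a..min b p1} x) \<partial>lborel) \<le> ennreal (2/(r-1))"
      unfolding h_def by (rule piece[OF r d c], rule disjI1) (simp add: s1)
    have P2: "(\<integral>\<^sup>+x. ennreal (h x * indicator {max a p1..min b p2} x) \<partial>lborel) \<le> ennreal (2/(r-1))"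
    proof -
      have "{max a p1..min b p2} \<subseteq> {p1..p2}" by auto
      then have "(\<forall>x\<in>{max a p1..min b p2}. 0 \<le> f' x) \<or> (\<forall>x\<in>{max a p1..min b p2}. f' x \<le> 0)"
        using s2 by blast
      then show ?thesis unfolding h_def by (rule piece[OF r d c])
    qed
    have P3: "(\<integral>\<^sup>+x. ennreal (h x * indicator {max a p2..b} x) \<partial>lborel) \<le> ennreal (2/(r-1))"
      unfolding h_def by (rule piece[OF r d c], rule disjI1) (simp add: s3)
    have "(\<integral>\<^sup>+x. ennreal (h x * indicator {a..b} x) \<partial>lborel) \<le>
      (\<integral>\<^sup>+x. ennreal (h x * indicator {a..min b p1} x) + ennreal (h x * indicator {max a p1..min b p2} x)
          + ennreal (h x * indicator {max a p2..b} x) \<partial>lborel)"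
    proof (rule nn_integral_mono)
      fix x
      show "ennreal (h x * indicator {a..b} x) \<le> ennreal (h x * indicator {a..min b p1} x) + ennreal (h x * indicator {max a p1..min b p2} x)
          + ennreal (h x * indicator {max a p2..b} x)"
      proof -
        have "(indicator {a..b} x :: real) \<le> indicator {a..min b p1} x + indicator {max a p1..min b p2} x + indicator {max a p2..b} x"
          by (cases "x \<le> p1"; cases "x \<le> p2"; cases "x \<in> {a..b}") (simp_all add: indicator_def)
        then have "h x * indicator {a..b} x \<le> h x * indicator {a..min b p1} x + h x * indicator {max a p1..min b p2} x + h x * indicator {max a p2..b} x"
          using hnn[of x] by (metis distrib_left mult_left_mono)
        then show ?thesis
          by (simp add: ennreal_plus[symmetric] hnn ennreal_leI del: ennreal_plus)
      qed
    qed
    also have "\<dots> = (\<integral>\<^sup>+x. ennreal (h x * indicator {a..min b p1} x) \<partial>lborel)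
       + (\<integral>\<^sup>+x. ennreal (h x * indicator {max a p1..min b p2} x) \<partial>lborel)
       + (\<integral>\<^sup>+x. ennreal (h x * indicator {max a p2..b} x) \<partial>lborel)"
      by (simp only: nn_integral_add[OF borel_measurable_add[OF hmI hmI] hmI] nn_integral_add[OF hmI hmI])
    also have "\<dots> \<le> ennreal (2/(r-1)) + ennreal (2/(r-1)) + ennreal (2/(r-1))"
      using P1 P2 P3 by (intro add_mono) auto
    also have "\<dots> = ennreal (6/(r-1))"
      using r by (simp add: ennreal_plus[symmetric] del: ennreal_plus)
    finally show ?thesis unfolding a_def b_def .
  qed
  have sup: "(SUP n. ennreal (h x * indicator {- real n..real n} x)) = ennreal (h x)" for x
  proof (rule antisym)
    show "(SUP n. ennreal (h x * indicator {- real n..real n} x)) \<le> ennreal (h x)"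
    proof (rule SUP_least, rule ennreal_leI)
      fix n :: nat
      show "h x * indicator {- real n..real n} x \<le> h x"
        using hnn[of x] by (cases "x \<in> {- real n..real n}") simp_all
    qed
    obtain n :: nat where "\<bar>x\<bar> \<le> real n" using real_arch_simple by blast
    then have "x \<in> {- real n..real n}" by (simp add: abs_le_iff)
    then have "ennreal (h x) = ennreal (h x * indicator {- real n..real n} x)"
      by simp
    then show "ennreal (h x) \<le> (SUP n. ennreal (h x * indicator {- real n..real n} x))"
      using SUP_upper[OF UNIV_I, of "\<lambda>n. ennreal (h x * indicator {- real n..real n} x)" n] by (rule ord_eq_le_trans)
  qed
  have inc: "incseq (\<lambda>n x. ennreal (h x * indicator {- real n..real n} x))"
    unfolding incseq_def le_fun_def
  proof (intro allI impI)
    fix m n :: nat and x :: real assume "m \<le> n"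
    then have "(indicator {- real m..real m} x :: real) \<le> indicator {- real n..real n} x"
      by (cases "x \<in> {- real m..real m}") (auto simp: indicator_def)
    then show "ennreal (h x * indicator {- real m..real m} x) \<le> ennreal (h x * indicator {- real n..real n} x)"
      using hnn[of x] by (intro ennreal_leI mult_left_mono)
  qed
  have "(\<integral>\<^sup>+x. ennreal (h x) \<partial>lborel) = (\<integral>\<^sup>+x. (SUP n. ennreal (h x * indicator {- real n..real n} x)) \<partial>lborel)"
    by (rule nn_integral_cong) (rule sup[symmetric])
  also have "\<dots> = (SUP n. (\<integral>\<^sup>+x. ennreal (h x * indicator {- real n..real n} x) \<partial>lborel))"
        by (rule nn_integral_monotone_convergence_SUP[OF inc]) (rule hmI)
  also have "\<dots> \<le> ennreal (6/(r-1))"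
    by (rule SUP_least) (rule bnd)
  finally show ?thesis unfolding h_def .
qed

lemma main_bound:
  fixes f f' :: "real \<Rightarrow> real"
  assumes r: "r > 1" and d: "\<And>x. (f has_real_derivative f' x) (at x)" and c: "continuous_on UNIV f'"
    and H: "(\<integral>\<^sup>+x. ennreal (\<bar>f' x\<bar> / jb (f x) powr r) \<partial>lborel) \<le> ennreal (6/(r-1))"
    and S: "S \<in> sets lborel" and Sm: "emeasure lborel S \<le> ennreal m" and m: "0 \<le> m"
    and l: "l > 0" and out: "\<And>x. x \<notin> S \<Longrightarrow> l \<le> \<bar>f' x\<bar>"
  shows "integrable lborel (\<lambda>x. 1 / jb (f x) powr r) \<and>
    (\<integral>x. 1 / jb (f x) powr r \<partial>lborel) \<le> m + 6/((r-1)*l)"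
proof -
  define h where "h x = \<bar>f' x\<bar> / jb (f x) powr r" for x
  define g where "g x = 1 / jb (f x) powr r" for x
  have cf: "continuous_on UNIV f"
    using d by (intro continuous_at_imp_continuous_on) (auto intro: DERIV_isCont)
  have gc: "continuous_on UNIV g" unfolding g_def jb_def
    by (intro continuous_intros cf) (auto simp: add_pos_nonneg)
  have hc: "continuous_on UNIV h" unfolding h_def by (rule h_cont[OF d c])
  have gm: "g \<in> borel_measurable lborel" using borel_measurable_continuous_onI[OF gc] by simp
  have hm: "h \<in> borel_measurable lborel" using borel_measurable_continuous_onI[OF hc] by simp
  have jb1: "1 \<le> jb (f x) powr r" for x
    using r by (intro ge_one_powr_ge_zero) (auto simp: jb_def)
  have gnn: "0 \<le> g x" for x unfolding g_def jb_def by simp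
  have hnn: "0 \<le> h x" for x unfolding h_def jb_def by simp
  have pt: "g x \<le> indicator S x + (1/l) * h x" for x
  proof (cases "x \<in> S")
    case True
    have "g x \<le> 1" unfolding g_def using jb1[of x] by (simp add: divide_le_eq_1)
    then show ?thesis using True hnn[of x] l by (simp add: add_increasing2)
  next
    case False
    have "g x = 1 * g x" by simp
    also have "\<dots> \<le> (\<bar>f' x\<bar> / l) * g x"
      using out[OF False] l gnn[of x] by (intro mult_right_mono) simp_all
    also have "\<dots> = (1/l) * h x" unfolding h_def g_def by simp
    finally show ?thesis using False by simp
  qed
  have "(\<integral>\<^sup>+x. ennreal (g x) \<partial>lborel) \<le> (\<integral>\<^sup>+x. (indicator S x + ennreal (1/l) * ennreal (h x)) \<partial>lborel)"
  proof (rule nn_integral_mono)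
    fix x
    have "ennreal (g x) \<le> ennreal (indicator S x + (1/l) * h x)" by (rule ennreal_leI[OF pt])
    also have "\<dots> = indicator S x + ennreal (1/l) * ennreal (h x)"
    proof -
      have e: "ennreal ((1/l) * h x) = ennreal (1/l) * ennreal (h x)" using l hnn[of x] by (intro ennreal_mult) auto
      have "ennreal (indicator S x + (1/l) * h x) = ennreal (indicator S x) + ennreal ((1/l) * h x)"
        using l hnn[of x] by (intro ennreal_plus) auto
      then show ?thesis unfolding e by (simp add: indicator_def)
    qed
    finally show "ennreal (g x) \<le> indicator S x + ennreal (1/l) * ennreal (h x)" .
  qed
  also have "\<dots> = emeasure lborel S + ennreal (1/l) * (\<integral>\<^sup>+x. ennreal (h x) \<partial>lborel)"
    using S hm by (simp add: nn_integral_add nn_integral_cmult)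
  also have "\<dots> \<le> ennreal m + ennreal (1/l) * ennreal (6/(r-1))"
    using Sm H unfolding h_def by (intro add_mono mult_left_mono) auto
  also have "\<dots> = ennreal (m + 6/((r-1)*l))"
    using m l r by (simp add: ennreal_plus[symmetric] ennreal_mult[symmetric] del: ennreal_plus)
  finally have I: "(\<integral>\<^sup>+x. ennreal (g x) \<partial>lborel) \<le> ennreal (m + 6/((r-1)*l))" .
  have int: "integrable lborel g"
  proof (rule integrableI_bounded)
    show "g \<in> borel_measurable lborel" by (rule gm)
    have "(\<integral>\<^sup>+x. ennreal (norm (g x)) \<partial>lborel) = (\<integral>\<^sup>+x. ennreal (g x) \<partial>lborel)"
      using gnn by simp
    also have "\<dots> < \<infinity>" using I by (simp add: le_less_trans)
    finally show "(\<integral>\<^sup>+x. ennreal (norm (g x)) \<partial>lborel) < \<infinity>" .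
  qed
  have "(\<integral>x. g x \<partial>lborel) = enn2real (\<integral>\<^sup>+x. ennreal (g x) \<partial>lborel)"
    using gm gnn by (intro integral_eq_nn_integral) auto
  also have "\<dots> \<le> enn2real (ennreal (m + 6/((r-1)*l)))"
    using I by (intro enn2real_mono) auto
  also have "\<dots> = m + 6/((r-1)*l)" using m l r by (intro enn2real_ennreal) simp
  finally show ?thesis using int unfolding g_def by simp
qed

lemma fourth_powr:
  assumes "y > 0" shows "(y^4) powr (-1/4) = 1 / (y::real)"
proof -
  have "(y^4) powr (-1/4) = (y powr 4) powr (-1/4)" using assms by (simp add: powr_realpow)
  also have "\<dots> = y powr (-1)" by (simp add: powr_powr)
  also have "\<dots> = 1 / y" using assms by (simp add: powr_minus_divide)
  finally show ?thesis .
qed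

lemma low4:
  assumes "0 < x" "x \<le> y^4" "y > 0" shows "1 / y \<le> x powr (-1/4::real)"
  using powr_mono2'[of "-1/4" x "y^4"] assms fourth_powr[of y] by simp

lemma cubic_H:
  fixes r s0 s1 s2 :: real
  assumes r: "r > 1"
  defines "f \<equiv> \<lambda>x::real. x^3 + s2 * x^2 + s1 * x + s0"
  defines "f' \<equiv> \<lambda>x::real. 3 * x^2 + 2 * s2 * x + s1"
  shows "(\<integral>\<^sup>+x. ennreal (\<bar>f' x\<bar> / jb (f x) powr r) \<partial>lborel) \<le> ennreal (6/(r-1))"
proof -
  define s where "s = s2 / 3"
  define D where "D = 3 * s1 - s2^2"
  have fid: "f' x = 3 * (x + s)^2 + D / 3" for x
    unfolding f'_def s_def D_def by (simp add: power2_eq_square algebra_simps add_divide_distrib diff_divide_distrib)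
  have d: "(f has_real_derivative f' x) (at x)" for x
    unfolding f_def f'_def by (auto intro!: derivative_eq_intros simp: power2_eq_square)
  have c: "continuous_on UNIV f'" unfolding f'_def by (intro continuous_intros)
  show ?thesis
  proof (cases "D \<ge> 0")
    case True
    have nn: "0 \<le> f' x" for x unfolding fid using True by simp
    show ?thesis by (rule total[OF r d c, of "-s" "-s"]) (simp_all add: nn)
  next
    case False
    define w where "w = sqrt (- D / 9)"
    have w0: "w \<ge> 0" unfolding w_def using False by simp
    have w2: "w^2 = - D / 9" unfolding w_def using False by simp
    have fid2: "f' x = 3 * ((x + s)^2 - w^2)" for x unfolding fid w2 by simp
    show ?thesis
    proof (rule total[OF r d c, of "-s-w" "-s+w"])
      show "-s-w \<le> -s+w" using w0 by simp
      show "0 \<le> f' x" if "x \<le> -s-w" for x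
      proof -
        have "w \<le> -(x+s)" using that by simp
        then have "w^2 \<le> (-(x+s))^2" using w0 by (intro power_mono) auto
        then show ?thesis unfolding fid2 by (simp add: power2_eq_square algebra_simps)
      qed
      show "0 \<le> f' x" if "x \<ge> -s+w" for x
      proof -
        have "w \<le> x+s" using that by simp
        then have "w^2 \<le> (x+s)^2" using w0 by (intro power_mono) auto
        then show ?thesis unfolding fid2 by simp
      qed
      have "f' x \<le> 0" if "x \<in> {-s-w..-s+w}" for x
      proof -
        have "\<bar>x+s\<bar> \<le> w" using that by auto
        then have "\<bar>x+s\<bar>^2 \<le> w^2" by (intro power_mono) auto
        then show ?thesis unfolding fid2 by simp
      qed
      then show "(\<forall>x\<in>{-s-w..-s+w}. 0 \<le> f' x) \<or> (\<forall>x\<in>{-s-w..-s+w}. f' x \<le> 0)" by blast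
    qed
  qed
qed

theorem lemma4p4:
  fixes \<rho> :: real
  assumes "\<rho> > 1"
  shows "\<exists>C. \<forall>\<sigma>0 \<sigma>1 \<sigma>2 :: real.
    integrable lborel (\<lambda>x. 1 / jb (x^3 + \<sigma>2 * x^2 + \<sigma>1 * x + \<sigma>0) powr \<rho>) \<and>
    (\<integral>x. 1 / jb (x^3 + \<sigma>2 * x^2 + \<sigma>1 * x + \<sigma>0) powr \<rho> \<partial>lborel)
      \<le> C * jb (3 * \<sigma>1 - \<sigma>2^2) powr (-1/4)"
proof -
  have r: "\<rho> > 1" by fact
  define K where "K = 6 / (\<rho> - 1)"
  have K0: "K > 0" unfolding K_def using r by simp
  show ?thesis
  proof (rule exI[of _ "4 * (4 + K)"], intro allI)
    fix s0 s1 s2 :: real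
    define f where "f = (\<lambda>x::real. x^3 + s2 * x^2 + s1 * x + s0)"
    define f' where "f' = (\<lambda>x::real. 3 * x^2 + 2 * s2 * x + s1)"
    define s where "s = s2 / 3"
    define D where "D = 3 * s1 - s2^2"
    have fid: "f' x = 3 * (x + s)^2 + D / 3" for x
      unfolding f'_def s_def D_def by (simp add: power2_eq_square algebra_simps add_divide_distrib diff_divide_distrib)
    have d: "(f has_real_derivative f' x) (at x)" for x
      unfolding f_def f'_def by (auto intro!: derivative_eq_intros simp: power2_eq_square)
    have c: "continuous_on UNIV f'" unfolding f'_def by (intro continuous_intros)
    have H: "(\<integral>\<^sup>+x. ennreal (\<bar>f' x\<bar> / jb (f x) powr \<rho>) \<partial>lborel) \<le> ennreal (6/(\<rho>-1))"
      unfolding f_def f'_def by (rule cubic_H[OF r])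
    have MB: "integrable lborel (\<lambda>x. 1 / jb (f x) powr \<rho>) \<and>
        (\<integral>x. 1 / jb (f x) powr \<rho> \<partial>lborel) \<le> m + 6/((\<rho>-1)*l)"
      if "S \<in> sets lborel" "emeasure lborel S \<le> ennreal m" "0 \<le> m" "l > 0"
         "\<And>x. x \<notin> S \<Longrightarrow> l \<le> \<bar>f' x\<bar>" for S m l
      by (rule main_bound[OF r d c H that])
    have jbD: "jb D = 1 + \<bar>D\<bar>" by (simp add: jb_def)
    have goal: "integrable lborel (\<lambda>x. 1 / jb (f x) powr \<rho>) \<and>
        (\<integral>x. 1 / jb (f x) powr \<rho> \<partial>lborel) \<le> 4 * (4 + K) * jb D powr (-1/4)"
    proof -
      consider "D \<ge> 3" | "-9 < D \<and> D < 3" | "D \<le> -9" by linarith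
      then show ?thesis
      proof cases
        case 1
        have out: "D/3 \<le> \<bar>f' x\<bar>" for x
        proof -
          have "0 \<le> 3 * (x + s)^2" by simp
          then show ?thesis unfolding fid using abs_ge_self[of "3 * (x + s)^2 + D / 3"] by linarith
        qed
        have M: "integrable lborel (\<lambda>x. 1 / jb (f x) powr \<rho>) \<and>
          (\<integral>x. 1 / jb (f x) powr \<rho> \<partial>lborel) \<le> 0 + 6/((\<rho>-1)*(D/3))"
          by (rule MB[of "{}" 0 "D/3"]) (use 1 out in auto)
        have "6/((\<rho>-1)*(D/3)) = K * (3 / D)" unfolding K_def by simp
        also have "\<dots> \<le> K * (4 / (1 + D))"
          using 1 K0 by (intro mult_left_mono) (auto simp: field_simps)
        also have "4 / (1 + D) = 4 * (1 + D) powr (-1)"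
          using 1 by (simp add: powr_minus_divide)
        also have "(1 + D) powr (-1) \<le> (1 + D) powr (-1/4)"
          using 1 by (intro powr_mono) auto
        finally have "6/((\<rho>-1)*(D/3)) \<le> K * (4 * (1 + D) powr (-1/4))"
          using K0 by (simp add: mult_left_mono)
        also have "\<dots> \<le> 4 * (4 + K) * jb D powr (-1/4)"
        proof -
          have aD: "\<bar>D\<bar> = D" using 1 by simp
          have P0: "0 \<le> (1 + D) powr (-1/4)" by simp
          have "4 * K * (1 + D) powr (-1/4) \<le> 4 * (4 + K) * (1 + D) powr (-1/4)"
            using K0 P0 by (intro mult_right_mono) auto
          then show ?thesis unfolding jbD aD by (simp add: mult.assoc)
        qed
        finally show ?thesis using M by simp
      next
        case 2
        have out: "1 \<le> \<bar>f' x\<bar>" if "x \<notin> {-s-2..-s+2}" for x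
        proof -
          have "2 \<le> \<bar>x + s\<bar>" using that by auto
          then have "2^2 \<le> \<bar>x + s\<bar>^2" by (intro power_mono) auto
          then show ?thesis unfolding fid using 2 by simp
        qed
        have M: "integrable lborel (\<lambda>x. 1 / jb (f x) powr \<rho>) \<and>
          (\<integral>x. 1 / jb (f x) powr \<rho> \<partial>lborel) \<le> 4 + 6/((\<rho>-1)*1)"
          by (rule MB[of "{-s-2..-s+2}" 4 1]) (use out in auto)
        have "1/2 \<le> jb D powr (-1/4)"
          using low4[of "jb D" 2] 2 unfolding jbD by auto
        then have "4 + K \<le> 4 * (4 + K) * jb D powr (-1/4)"
        proof -
          have X: "4 * (4 + K) * (1/2) \<le> 4 * (4 + K) * jb D powr (-1/4)"
            using K0 \<open>1/2 \<le> jb D powr (-1/4)\<close> by (intro mult_left_mono) auto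
          have "4 + K \<le> 2 * (4 + K)" using K0 by simp
          also have "\<dots> = 4 * (4 + K) * (1/2)" by simp
          also note X
          finally show ?thesis .
        qed
        then show ?thesis using M unfolding K_def by simp
      next
        case 3
        define c0 where "c0 = - D / 9"
        define t where "t = sqrt (sqrt c0)"
        have c01: "c0 \<ge> 1" unfolding c0_def using 3 by simp
        have t1: "t \<ge> 1" unfolding t_def using c01 by simp
        have t2: "t^2 = sqrt c0" unfolding t_def using c01 by simp
        have t4: "t^4 = c0"
        proof -
          have "t^4 = (t^2)^2" by simp
          then show ?thesis using t2 c01 by simp
        qed
        have tle: "t \<le> c0"
        proof -
          have "t = t^1" by simp
          also have "\<dots> \<le> t^4" using t1 by (intro power_increasing) auto
          finally show ?thesis using t4 by simp
        qed
        define A where "A = sqrt (c0 + t)"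
        define B where "B = sqrt (c0 - t)"
        have AB: "B \<le> A" unfolding A_def B_def using t1 by simp
        have B0: "0 \<le> B" unfolding B_def using tle by simp
        define S where "S = {-s-A..-s-B} \<union> {-s+B..-s+A}"
        have fid3: "f' x = 3 * ((x + s)^2 - c0)" for x unfolding fid c0_def by simp
        have out: "3 * t \<le> \<bar>f' x\<bar>" if "x \<notin> S" for x
        proof -
          have "\<bar>x + s\<bar> < B \<or> A < \<bar>x + s\<bar>" using that unfolding S_def by (auto simp: abs_if)
          then show ?thesis
          proof
            assume "\<bar>x + s\<bar> < B"
            then have "\<bar>x + s\<bar>^2 \<le> B^2" by (intro power_mono) auto
            then have "(x+s)^2 \<le> c0 - t" unfolding B_def using tle by simp
            then show ?thesis unfolding fid3 by simp
          next
            assume "A < \<bar>x + s\<bar>"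
            then have "A^2 \<le> \<bar>x + s\<bar>^2" using t1 c01 unfolding A_def by (intro power_mono) auto
            then have "c0 + t \<le> (x+s)^2" unfolding A_def using tle t1 by simp
            then show ?thesis unfolding fid3 by simp
          qed
        qed
        have Sm: "emeasure lborel S \<le> ennreal (2 * (A - B))"
        proof -
          have "emeasure lborel S \<le> emeasure lborel {-s-A..-s-B} + emeasure lborel {-s+B..-s+A}"
            unfolding S_def by (rule emeasure_subadditive) auto
          also have "\<dots> = ennreal (A - B) + ennreal (A - B)" using AB by simp
          also have "\<dots> = ennreal (2 * (A - B))" using AB by (simp flip: ennreal_plus)
          finally show ?thesis .
        qed
        have M: "integrable lborel (\<lambda>x. 1 / jb (f x) powr \<rho>) \<and>
          (\<integral>x. 1 / jb (f x) powr \<rho> \<partial>lborel) \<le> 2 * (A - B) + 6/((\<rho>-1)*(3*t))"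
        proof (rule MB[OF _ Sm])
          show "S \<in> sets lborel" unfolding S_def by simp
          show "0 \<le> 2 * (A - B)" using AB by simp
          show "0 < 3 * t" using t1 by simp
          show "3 * t \<le> \<bar>f' x\<bar>" if "x \<notin> S" for x using out[OF that] .
        qed
        have AmB: "A - B \<le> 2 / t"
        proof -
          have prod: "(A - B) * (A + B) = 2 * t"
            unfolding A_def B_def using tle t1 by (simp add: algebra_simps power2_eq_square[symmetric])
          have "t^2 \<le> A" unfolding t2 A_def using t1 by simp
          then have ApB: "t^2 \<le> A + B" using B0 by simp
          have "(A - B) * t^2 \<le> (A - B) * (A + B)" using AB ApB by (intro mult_left_mono) auto
          then have "(A - B) * t^2 \<le> 2 * t" using prod by simp
          then have "((A - B) * t) * t \<le> 2 * t" by (simp add: power2_eq_square mult.assoc)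
          moreover have tpos: "0 < t" using t1 by simp
          ultimately have "(A - B) * t \<le> 2" by (rule mult_right_le_imp_le)
          then show ?thesis using t1 by (simp add: le_divide_eq)
        qed
        have "2 * (A - B) + 6/((\<rho>-1)*(3*t)) \<le> 4 / t + K / (3 * t)"
          using AmB unfolding K_def by simp
        also have "\<dots> \<le> (4 + K) / t"
        proof -
          have "K / (3 * t) \<le> K / t" using t1 K0 by (intro divide_left_mono) auto
          then show ?thesis by (simp add: add_divide_distrib)
        qed
        also have "\<dots> \<le> (4 + K) * (2 * jb D powr (-1/4))"
        proof -
          have "jb D \<le> (2 * t)^4" unfolding jbD using 3 t4 c0_def t1 by (simp add: power_mult_distrib)
          then have "1 / (2 * t) \<le> jb D powr (-1/4)" using t1 by (intro low4) (auto simp: jb_def)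
          then have "2 * (1 / (2 * t)) \<le> 2 * jb D powr (-1/4)" by simp
          then have "1 / t \<le> 2 * jb D powr (-1/4)" by simp
          then have "(4 + K) * (1 / t) \<le> (4 + K) * (2 * jb D powr (-1/4))"
            using K0 by (intro mult_left_mono) auto
          then show ?thesis by simp
        qed
        also have "\<dots> \<le> 4 * (4 + K) * jb D powr (-1/4)"
        proof -
          have P0: "0 \<le> jb D powr (-1/4)" by simp
          have "(2 * (4 + K)) * jb D powr (-1/4) \<le> (4 * (4 + K)) * jb D powr (-1/4)"
            using K0 P0 by (intro mult_right_mono) auto
          then show ?thesis by (simp only: mult.assoc[symmetric] mult.commute[of "4+K" 2])
        qed
        finally show ?thesis using M by simp
      qed
    qed
    then show "integrable lborel (\<lambda>x. 1 / jb (x^3 + s2 * x^2 + s1 * x + s0) powr \<rho>) \<and>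
      (\<integral>x. 1 / jb (x^3 + s2 * x^2 + s1 * x + s0) powr \<rho> \<partial>lborel) \<le> 4 * (4 + K) * jb (3 * s1 - s2^2) powr (-1/4)"
      unfolding f_def D_def by simp
  qed
qed


end
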